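(* Let $h(x)=\frac{1}{e^x-1}$. For every integer $k\ge1$ and $\varepsilon>0$, $$D_{2,k}^\varepsilon:=\int_\varepsilon^\infty\frac{x^kh^{(k)}(x)}{e^x-1}dx=\sum_{j=1}^{k+1}(-1)^{j+1}K_{k+1,j}\,Z_\varepsilon(k,j).$$
   Context: For integers $0\le j\le m$, $K_{m,j}=\frac1m\binom mjB_{m-j}+\delta_{j,m-1}$, where $B_n$ are Bernoulli numbers ($\frac{t}{e^t-1}=\sum_nB_n\frac{t^n}{n!}$) and $\delta$ is the Kronecker delta. For $\varepsilon>0$ and integers $k,j\ge0$, $Z_\varepsilon(k,j)=\sum_{q=1}^\infty q^j\int_\varepsilon^\infty e^{-qy}y^kdy$. *)

theory Defs
  imports "HOL-Analysis.Analysis" "HOL-Computational_Algebra.Formal_Power_Series"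
begin

text \<open>Bernoulli numbers via the exponential generating function t/(e^t-1) (so B_1 = -1/2).\<close>
definition bernoulli_num :: "nat \<Rightarrow> real" where
  "bernoulli_num n = fact n * fps_nth (fps_X / (fps_exp 1 - 1)) n"

definition K_coef :: "nat \<Rightarrow> nat \<Rightarrow> real" where
  "K_coef m j = (1 / real m) * real (m choose j) * bernoulli_num (m - j)
               + (if j = m - 1 then 1 else 0)"

definition Z_eps :: "real \<Rightarrow> nat \<Rightarrow> nat \<Rightarrow> real" where
  "Z_eps \<epsilon> k j = (\<Sum>q. real (Suc q) ^ j *
       integral {\<epsilon>..} (\<lambda>y. exp (- real (Suc q) * y) * y ^ k))"

definition h_fun :: "real \<Rightarrow> real" where
  "h_fun x = 1 / (exp x - 1)"

end

theory Submission
  imports Defs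
begin


lemma G_mult: "fps_X / (fps_exp (1::real) - 1) * (fps_exp 1 - 1) = fps_X"
proof -
  have sd: "subdegree (fps_exp (1::real) - 1) = 1"
    by (rule subdegreeI) (auto simp: less_Suc_eq)
  then have ne: "fps_exp (1::real) - 1 \<noteq> 0" by auto
  show ?thesis by (rule fps_times_divide_eq) (use ne sd in simp_all)
qed

lemma T_eq: "(\<Sum>q=1..n. fps_exp (- real q)) * (fps_exp 1 - 1) = 1 - fps_exp (- real n)"
proof (induction n)
  case 0 then show ?case by simp
next
  case (Suc n)
  have e: "fps_exp 1 * fps_exp (- 1 - real n) = fps_exp (- real n)"
    by (simp flip: fps_exp_add_mult)
  show ?case using Suc by (simp add: algebra_simps e)
qed

lemma faul_fps:
  fixes n k :: nat
  shows "(\<Sum>q=1..n. (- real q) ^ k) = (\<Sum>j=1..k+1. (-1)^(j+1) * ((1 / real (k+1)) * real ((k+1) choose j) * bernoulli_num (k + 1 - j)) * real n ^ j)"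
proof -
  define G where "G = fps_X / (fps_exp (1::real) - 1)"
  define T where "T = (\<Sum>q=1..n. fps_exp (- real q))"
  define E where "E = (1::real fps) - fps_exp (- real n)"
  have "T * fps_X = T * (G * (fps_exp 1 - 1))" using G_mult by (simp add: G_def)
  also have "\<dots> = G * E" unfolding E_def T_def by (simp add: T_eq[symmetric] algebra_simps)
  finally have eq: "fps_nth (T * fps_X) (k+1) = fps_nth (G * E) (k+1)" by simp
  have l: "fps_nth (T * fps_X) (k+1) = (\<Sum>q=1..n. (- real q) ^ k) / fact k"
    by (simp add: T_def fps_sum_nth sum_divide_distrib)
  have "fps_nth (G * E) (k+1) = (\<Sum>i=0..k+1. fps_nth G i * fps_nth E (k+1-i))" by (simp add: fps_mult_nth)
  also have "\<dots> = (\<Sum>i=0..k. fps_nth G i * fps_nth E (k+1-i))" by (simp add: E_def)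
  also have "\<dots> = (\<Sum>j=1..k+1. fps_nth G (k+1-j) * fps_nth E j)"
    by (rule sum.reindex_bij_witness[of _ "\<lambda>j. k+1-j" "\<lambda>i. k+1-i"]) auto
  also have "\<dots> = (\<Sum>j=1..k+1. fps_nth G (k+1-j) * (- ((- real n) ^ j) / fact j))"
    by (intro sum.cong) (auto simp: E_def)
  finally have r: "fps_nth (G * E) (k+1) = (\<Sum>j=1..k+1. fps_nth G (k+1-j) * (- ((- real n) ^ j) / fact j))" .
  have "(\<Sum>q=1..n. (- real q) ^ k) = fact k * (\<Sum>j=1..k+1. fps_nth G (k+1-j) * (- ((- real n) ^ j) / fact j))"
    using eq l r by (simp add: field_simps)
  also have "\<dots> = (\<Sum>j=1..k+1. (-1)^(j+1) * ((1 / real (k+1)) * real ((k+1) choose j) * bernoulli_num (k + 1 - j)) * real n ^ j)"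
    unfolding sum_distrib_left
  proof (intro sum.cong refl)
    fix j assume j: "j \<in> {1..k+1}"
    have c: "real ((k+1) choose j) = fact (k+1) / (fact j * fact (k+1-j))"
      using j by (simp add: binomial_fact)
    have f: "fact (k+1) = real (k+1) * fact k" by simp
    show "fact k * (fps_nth G (k + 1 - j) * (- ((- real n) ^ j) / fact j)) =
         (-1)^(j+1) * ((1 / real (k+1)) * real ((k+1) choose j) * bernoulli_num (k + 1 - j)) * real n ^ j"
      unfolding c bernoulli_num_def G_def[symmetric] f
      by (simp add: power_minus' field_simps del: of_nat_Suc fact_Suc)
  qed
  finally show ?thesis .
qed



definition cc :: "nat \<Rightarrow> nat \<Rightarrow> real" where
  "cc k n = (if n = 0 then 0 else (- real n) ^ k)"

definition FF :: "nat \<Rightarrow> real \<Rightarrow> real" where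
  "FF k z = (\<Sum>n. cc k n * z ^ n)"

lemma cc_summable: "\<bar>z\<bar> < 1 \<Longrightarrow> summable (\<lambda>n. cc k n * z ^ n)"
proof (induction k arbitrary: z)
  case 0
  have "summable (\<lambda>n. z * z ^ n)"
    using 0 by (intro summable_mult summable_geometric) simp
  then have "summable (\<lambda>n. cc 0 (Suc n) * z ^ Suc n)" by (simp add: cc_def)
  then show ?case using summable_Suc_iff[of "\<lambda>n. cc 0 n * z ^ n"] by blast
next
  case (Suc k)
  have "summable (\<lambda>n. diffs (cc k) n * z ^ n)"
    by (rule termdiff_converges[where K=1]) (use Suc in auto)
  then have "summable (\<lambda>n. (- z) * (diffs (cc k) n * z ^ n))" by (rule summable_mult)
  then have "summable (\<lambda>n. cc (Suc k) (Suc n) * z ^ Suc n)"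
    by (simp add: cc_def diffs_def algebra_simps)
  then show ?case using summable_Suc_iff[of "\<lambda>n. cc (Suc k) n * z ^ n"] by blast
qed

lemma cc_summable_norm: "\<bar>z\<bar> < 1 \<Longrightarrow> summable (\<lambda>n. norm (cc k n * z ^ n))"
proof -
  assume z: "\<bar>z\<bar> < 1"
  show ?thesis
    by (rule powser_insidea[OF cc_summable[of "(1 + \<bar>z\<bar>)/2"]]) (use z in auto)
qed

lemma FF_deriv: "\<bar>z\<bar> < 1 \<Longrightarrow> (FF k has_field_derivative (\<Sum>n. diffs (cc k) n * z ^ n)) (at z)"
  unfolding FF_def[abs_def]
  by (rule termdiffs_strong'[where K=1]) (auto intro: cc_summable)

lemma FF_shift: "\<bar>z\<bar> < 1 \<Longrightarrow> (\<Sum>n. diffs (cc k) n * z ^ n) * (- z) = FF (Suc k) z"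
proof -
  assume z: "\<bar>z\<bar> < 1"
  have s: "summable (\<lambda>n. diffs (cc k) n * z ^ n)"
    by (rule termdiff_converges[where K=1]) (use z cc_summable in auto)
  have "FF (Suc k) z = (\<Sum>n. cc (Suc k) (Suc n) * z ^ Suc n)"
    unfolding FF_def using suminf_split_head[OF cc_summable[OF z, of "Suc k"]]
    by (simp add: cc_def)
  also have "\<dots> = (\<Sum>n. (- z) * (diffs (cc k) n * z ^ n))"
    by (simp add: cc_def diffs_def algebra_simps)
  also have "\<dots> = (- z) * (\<Sum>n. diffs (cc k) n * z ^ n)"
    by (rule suminf_mult[OF s])
  finally show ?thesis by simp
qed

lemma FF_exp_deriv:
  assumes "x > 0"
  shows "((\<lambda>x. FF k (exp (- x))) has_field_derivative FF (Suc k) (exp (- x))) (at x)"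
proof -
  have z: "\<bar>exp (- x)\<bar> < 1" using assms by simp
  have "((\<lambda>x. FF k (exp (- x))) has_field_derivative
      (\<Sum>n. diffs (cc k) n * exp (- x) ^ n) * (- exp (- x))) (at x)"
    by (rule DERIV_chain2[where g="\<lambda>x. exp (- x)", OF FF_deriv[OF z]]) (auto intro!: derivative_eq_intros)
  then show ?thesis using FF_shift[OF z] by simp
qed

lemma h_FF: "x > 0 \<Longrightarrow> h_fun x = FF 0 (exp (- x))"
proof -
  assume x: "x > 0"
  define z where "z = exp (- x)"
  have z: "\<bar>z\<bar> < 1" "z > 0" using x by (auto simp: z_def)
  have "FF 0 z = (\<Sum>n. cc 0 (Suc n) * z ^ Suc n)"
    unfolding FF_def using suminf_split_head[OF cc_summable[OF z(1), of 0]]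
    by (simp add: cc_def)
  also have "\<dots> = (\<Sum>n. z * z ^ n)" by (simp add: cc_def)
  also have "\<dots> = z * (1 / (1 - z))"
    using suminf_mult[OF summable_geometric[of z]] suminf_geometric[of z] z by simp
  finally have "FF 0 z = z / (1 - z)" by simp
  moreover have "h_fun x = z / (1 - z)"
    using x z unfolding h_fun_def z_def by (simp add: exp_minus field_simps)
  ultimately show ?thesis by (simp add: z_def)
qed

lemma derivk: "x > 0 \<Longrightarrow> (deriv ^^ k) h_fun x = FF k (exp (- x))"
proof (induction k arbitrary: x)
  case 0 then show ?case by (simp add: h_FF)
next
  case (Suc k)
  have ev: "eventually (\<lambda>y. (deriv ^^ k) h_fun y = FF k (exp (- y))) (nhds x)"
    using eventually_nhds_in_open[of "{0<..}" x] Suc.prems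
    by (auto elim!: eventually_mono intro: Suc.IH)
  have "(deriv ^^ Suc k) h_fun x = deriv (\<lambda>y. FF k (exp (- y))) x"
    by (simp add: deriv_cong_ev[OF ev refl])
  also have "\<dots> = FF (Suc k) (exp (- x))"
    by (rule DERIV_imp_deriv[OF FF_exp_deriv[OF Suc.prems]])
  finally show ?case .
qed



lemma pow_le_exp: "(t::real) \<ge> 0 \<Longrightarrow> t ^ k / fact k \<le> exp t"
proof -
  assume t: "t \<ge> 0"
  have s: "summable (\<lambda>n. t ^ n /\<^sub>R fact n)" using exp_converges[of t] by (rule sums_summable)
  have "sum (\<lambda>n. t ^ n /\<^sub>R fact n) {k} \<le> (\<Sum>n. t ^ n /\<^sub>R fact n)"
    by (rule sum_le_suminf[OF s]) (use t in auto)
  then show ?thesis using sums_unique[OF exp_converges[of t]] by (simp add: divide_inverse mult.commute)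
qed

lemma integrable_expk:
  fixes r \<epsilon> :: real
  assumes r: "r \<ge> 1" and e: "\<epsilon> \<ge> 0"
  shows "(\<lambda>y. exp (- r * y) * y ^ k) integrable_on {\<epsilon>..}"
proof (rule measurable_bounded_by_integrable_imp_integrable)
  show "(\<lambda>y. exp (- r * y) * y ^ k) \<in> borel_measurable (lebesgue_on {\<epsilon>..})"
    by (intro continuous_imp_measurable_on_sets_lebesgue continuous_intros) auto
  show "{\<epsilon>..} \<in> sets lebesgue" by auto
  show "(\<lambda>y. fact k * 2 ^ k * exp (- (1/2) * y)) integrable_on {\<epsilon>..}"
    by (intro integrable_on_mult_right integrable_on_exp_minus_to_infinity) auto
  fix y assume y: "y \<in> {\<epsilon>..}"
  then have y0: "y \<ge> 0" using e by auto
  have "(y/2) ^ k / fact k \<le> exp (y/2)" by (rule pow_le_exp) (use y0 in auto)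
  then have p: "y ^ k \<le> fact k * 2 ^ k * exp (y/2)"
    by (simp add: field_simps power_divide)
  have q: "exp (- r * y) * exp (y/2) \<le> exp (- (1/2) * y)"
    unfolding exp_add[symmetric] using r y0 mult_right_mono[OF r y0] by simp
  have "norm (exp (- r * y) * y ^ k) = exp (- r * y) * y ^ k" using y0 by simp
  also have "\<dots> \<le> exp (- r * y) * (fact k * 2 ^ k * exp (y/2))"
    by (rule mult_left_mono[OF p]) simp
  also have "\<dots> = fact k * 2 ^ k * (exp (- r * y) * exp (y/2))" by simp
  also have "\<dots> \<le> fact k * 2 ^ k * exp (- (1/2) * y)"
    by (rule mult_left_mono[OF q]) simp
  finally show "norm (exp (- r * y) * y ^ k) \<le> fact k * 2 ^ k * exp (- (1/2) * y)" .
qed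

definition II :: "real \<Rightarrow> nat \<Rightarrow> nat \<Rightarrow> real" where
  "II \<epsilon> k n = integral {\<epsilon>..} (\<lambda>y. exp (- real n * y) * y ^ k)"

lemma II_bound:
  assumes e: "\<epsilon> > 0"
  shows "0 \<le> II \<epsilon> k (Suc q) \<and> II \<epsilon> k (Suc q) \<le> exp (- real q * \<epsilon>) * II \<epsilon> k 1"
proof
  have i1: "(\<lambda>y. exp (- real (Suc q) * y) * y ^ k) integrable_on {\<epsilon>..}"
    by (rule integrable_expk) (use e in auto)
  have i2: "(\<lambda>y. exp (- real (1::nat) * y) * y ^ k) integrable_on {\<epsilon>..}"
    by (rule integrable_expk) (use e in auto)
  show "0 \<le> II \<epsilon> k (Suc q)" unfolding II_def
    by (rule integral_nonneg[OF i1]) (use e in auto)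
  have "II \<epsilon> k (Suc q) \<le> integral {\<epsilon>..} (\<lambda>y. exp (- real q * \<epsilon>) * (exp (- real (1::nat) * y) * y ^ k))"
    unfolding II_def
  proof (rule integral_le[OF i1 integrable_on_mult_right[OF i2]])
    fix y assume y: "y \<in> {\<epsilon>..}"
    have "exp (- real (Suc q) * y) = exp (- real q * y) * exp (- real (1::nat) * y)"
      by (simp add: algebra_simps flip: exp_add)
    moreover have "exp (- real q * y) \<le> exp (- real q * \<epsilon>)"
      using y by (simp add: mult_left_mono)
    ultimately show "exp (- real (Suc q) * y) * y ^ k \<le> exp (- real q * \<epsilon>) * (exp (- real (1::nat) * y) * y ^ k)"
      using y e by (simp add: mult_right_mono)
  qed
  then show "II \<epsilon> k (Suc q) \<le> exp (- real q * \<epsilon>) * II \<epsilon> k 1" by (simp add: II_def)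
qed

lemma summable_II:
  assumes e: "\<epsilon> > 0"
  shows "summable (\<lambda>q. real (Suc q) ^ j * II \<epsilon> k (Suc q))"
proof -
  define w where "w = exp (- \<epsilon>)"
  have w: "\<bar>w\<bar> < 1" "w > 0" using e by (auto simp: w_def)
  have "summable (\<lambda>n. norm (cc j n * w ^ n))" by (rule cc_summable_norm[OF w(1)])
  then have "summable (\<lambda>n. norm (cc j (Suc n) * w ^ Suc n))"
    using summable_Suc_iff[of "\<lambda>n. norm (cc j n * w ^ n)"] by blast
  then have s: "summable (\<lambda>n. (exp \<epsilon> * II \<epsilon> k 1) * norm (cc j (Suc n) * w ^ Suc n))"
    by (rule summable_mult)
  show ?thesis
  proof (rule summable_comparison_test'[OF s])
    fix n :: nat assume "0 \<le> n"
    have b: "0 \<le> II \<epsilon> k (Suc n)" "II \<epsilon> k (Suc n) \<le> exp (- real n * \<epsilon>) * II \<epsilon> k 1"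
      using II_bound[OF e] by auto
    have "norm (real (Suc n) ^ j * II \<epsilon> k (Suc n)) = real (Suc n) ^ j * II \<epsilon> k (Suc n)"
      using b by simp
    also have "\<dots> \<le> real (Suc n) ^ j * (exp (- real n * \<epsilon>) * II \<epsilon> k 1)"
      by (rule mult_left_mono[OF b(2)]) simp
    also have "exp (- real n * \<epsilon>) = exp \<epsilon> * w ^ Suc n"
      unfolding w_def by (simp flip: exp_of_nat_mult exp_add add: algebra_simps)
    also have "real (Suc n) ^ j * (exp \<epsilon> * w ^ Suc n * II \<epsilon> k 1)
        = (exp \<epsilon> * II \<epsilon> k 1) * norm (cc j (Suc n) * w ^ Suc n)"
      using w by (simp add: cc_def abs_mult power_abs add.commute)
    finally show "norm (real (Suc n) ^ j * II \<epsilon> k (Suc n)) \<le> (exp \<epsilon> * II \<epsilon> k 1) * norm (cc j (Suc n) * w ^ Suc n)" .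
  qed
qed



lemma sum_shift_aux: "k \<ge> 1 \<Longrightarrow> (\<Sum>q=1..n. (- real q) ^ k) = (\<Sum>i<n. (- real i) ^ k) + (- real n) ^ k"
proof (induction n)
  case 0 then show ?case by simp
next
  case (Suc n) then show ?case by (simp add: sum.atLeast1_atMost_eq)
qed

lemma faul:
  assumes k: "k \<ge> 1"
  shows "(\<Sum>j=1..k+1. (-1)^(j+1) * K_coef (k+1) j * real n ^ j) = (\<Sum>i<n. (- real i) ^ k)"
proof -
  have "(\<Sum>j=1..k+1. (-1)^(j+1) * K_coef (k+1) j * real n ^ j)
     = (\<Sum>j=1..k+1. (-1)^(j+1) * ((1 / real (k+1)) * real ((k+1) choose j) * bernoulli_num (k + 1 - j)) * real n ^ j)
       + (\<Sum>j=1..k+1. (if j = k then (-1)^(k+1) * real n ^ k else 0))"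
    unfolding sum.distrib[symmetric] K_coef_def
    by (intro sum.cong refl) (auto simp: algebra_simps)
  also have "(\<Sum>j=1..k+1. (if j = k then (-1)^(k+1) * real n ^ k else (0::real))) = (-1)^(k+1) * real n ^ k"
    using k by (simp add: sum.delta)
  also note faul_fps[symmetric]
  also note sum_shift_aux[OF k]
  finally show ?thesis by (simp add: power_minus')
qed

lemma cauchy:
  assumes k: "k \<ge> 1" and z: "0 < z" "z < 1"
  shows "(\<lambda>n. (\<Sum>i<n. (- real i) ^ k) * z ^ n) sums (FF k z * FF 0 z)"
proof -
  have z1: "\<bar>z\<bar> < 1" using z by simp
  have cp: "(\<lambda>n. \<Sum>i\<le>n. (cc k i * z ^ i) * (cc 0 (n - i) * z ^ (n - i))) sums
       ((\<Sum>n. cc k n * z ^ n) * (\<Sum>n. cc 0 n * z ^ n))"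
    by (rule Cauchy_product_sums[OF cc_summable_norm[OF z1] cc_summable_norm[OF z1]])
  have eq: "(\<Sum>i\<le>n. (cc k i * z ^ i) * (cc 0 (n - i) * z ^ (n - i))) = (\<Sum>i<n. (- real i) ^ k) * z ^ n" for n
  proof -
    have "(\<Sum>i\<le>n. (cc k i * z ^ i) * (cc 0 (n - i) * z ^ (n - i)))
        = (\<Sum>i<n. (cc k i * z ^ i) * (cc 0 (n - i) * z ^ (n - i)))"
      by (simp add: lessThan_Suc_atMost[symmetric] cc_def)
    also have "\<dots> = (\<Sum>i<n. (- real i) ^ k * z ^ n)"
    proof (intro sum.cong refl)
      fix i assume i: "i \<in> {..<n}"
      then have "z ^ i * z ^ (n - i) = z ^ n" by (simp flip: power_add)
      then show "(cc k i * z ^ i) * (cc 0 (n - i) * z ^ (n - i)) = (- real i) ^ k * z ^ n"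
        using i k by (auto simp: cc_def)
    qed
    finally show ?thesis by (simp add: sum_distrib_right)
  qed
  show ?thesis using cp unfolding eq FF_def .
qed

lemma integrand_sums:
  assumes k: "k \<ge> 1" and x: "x > 0"
  shows "(\<lambda>n. (\<Sum>i<n. (- real i) ^ k) * (exp (- real n * x) * x ^ k)) sums
           (x ^ k * (deriv ^^ k) h_fun x / (exp x - 1))"
proof -
  define z where "z = exp (- x)"
  have z: "0 < z" "z < 1" using x by (auto simp: z_def)
  have "(\<lambda>n. ((\<Sum>i<n. (- real i) ^ k) * z ^ n) * x ^ k) sums (FF k z * FF 0 z * x ^ k)"
    by (rule sums_mult2[OF cauchy[OF k z]])
  moreover have "exp (- real n * x) = z ^ n" for n
    unfolding z_def by (simp flip: exp_of_nat_mult)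
  moreover have "x ^ k * (deriv ^^ k) h_fun x / (exp x - 1) = FF k z * FF 0 z * x ^ k"
  proof -
    have h: "1 / (exp x - 1) = FF 0 z" using h_FF[OF x] unfolding z_def h_fun_def .
    have "x ^ k * (deriv ^^ k) h_fun x / (exp x - 1) = x ^ k * FF k z * (1 / (exp x - 1))"
      using derivk[OF x, of k] unfolding z_def by simp
    then show ?thesis unfolding h by simp
  qed
  ultimately show ?thesis by (simp add: mult.assoc)
qed



theorem mainTheorem18:
  fixes k :: nat and \<epsilon> :: real
  assumes "k \<ge> 1" and "\<epsilon> > 0"
  shows "integral {\<epsilon>..} (\<lambda>x. x ^ k * (deriv ^^ k) h_fun x / (exp x - 1))
       = (\<Sum>j=1..k+1. (-1) ^ (j + 1) * K_coef (k + 1) j * Z_eps \<epsilon> k j)"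
proof -
  note k = assms(1) and e = assms(2)
  define s :: real where "s = (-1) ^ k"
  have ss: "s * s = 1" unfolding s_def power_mult_distrib[symmetric] by simp
  have ssx: "s * (s * x) = x" for x by (simp add: mult.assoc[symmetric] ss)
  define ee where "ee n = (\<Sum>i<n. real i ^ k)" for n
  define F where "F x = x ^ k * (deriv ^^ k) h_fun x / (exp x - 1)" for x
  define t where "t n x = exp (- real n * x) * x ^ k" for n x
  have dd: "(\<Sum>i<n. (- real i) ^ k) = s * ee n" for n
    unfolding ee_def s_def sum_distrib_left by (intro sum.cong refl power_minus)
  have ee0: "ee 0 = 0" by (simp add: ee_def)
  have ee_nn: "ee n \<ge> 0" for n by (simp add: ee_def sum_nonneg)
  have II_nn: "ee n * II \<epsilon> k n \<ge> 0" for n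
    using II_bound[OF e, of k "n - 1"] ee_nn[of n] by (cases n) (auto simp: ee0)
  have ser: "(\<lambda>n. ee n * t n x) sums (s * F x)" if x: "x \<in> {\<epsilon>..}" for x
  proof -
    have "(\<lambda>n. s * (s * ee n * t n x)) sums (s * F x)"
      using sums_mult[OF integrand_sums[OF k, of x], of s] x e
      unfolding dd F_def t_def by auto
    then show ?thesis by (simp only: ssx mult.assoc)
  qed
  define g where "g x = (\<Sum>n. ee n * t n x)" for x
  define f where "f N x = (\<Sum>n<N. ee n * t n x)" for N x
  have int_t: "(\<lambda>x. ee n * t n x) integrable_on {\<epsilon>..}" for n
  proof (cases n)
    case 0 then show ?thesis by (simp add: ee0 integrable_0)
  next
    case (Suc m)
    show ?thesis unfolding t_def
      by (rule integrable_on_mult_right, rule integrable_expk) (use Suc e in auto)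
  qed
  have int_f: "f N integrable_on {\<epsilon>..}" for N
    unfolding f_def by (rule integrable_sum) (auto intro: int_t)
  have integral_f: "integral {\<epsilon>..} (f N) = (\<Sum>n<N. ee n * II \<epsilon> k n)" for N
    unfolding f_def by (subst integral_sum[OF _ int_t]) (auto simp: II_def t_def)
  have sumII: "summable (\<lambda>n. ee n * II \<epsilon> k n)"
  proof -
    have eqq: "ee (Suc q) * II \<epsilon> k (Suc q) =
      s * (\<Sum>j=1..k+1. (-1)^(j+1) * K_coef (k+1) j * (real (Suc q) ^ j * II \<epsilon> k (Suc q)))" for q
    proof -
      have "ee (Suc q) = s * (s * ee (Suc q))" by (simp only: ssx)
      also have "s * ee (Suc q) = (\<Sum>j=1..k+1. (-1)^(j+1) * K_coef (k+1) j * real (Suc q) ^ j)"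
        using faul[OF k, of "Suc q"] dd by simp
      finally have "ee (Suc q) * II \<epsilon> k (Suc q) = s * ((\<Sum>j=1..k+1. (-1)^(j+1) * K_coef (k+1) j * real (Suc q) ^ j) * II \<epsilon> k (Suc q))"
        by (simp only: mult.assoc)
      then show ?thesis by (simp only: sum_distrib_right mult.assoc)
    qed
    have "summable (\<lambda>q. ee (Suc q) * II \<epsilon> k (Suc q))"
      unfolding eqq
      by (intro summable_mult summable_sum summable_II[OF e])
    then show ?thesis using summable_Suc_iff[of "\<lambda>n. ee n * II \<epsilon> k n"] by blast
  qed
  have mct: "g integrable_on {\<epsilon>..} \<and> ((\<lambda>N. integral {\<epsilon>..} (f N)) \<longlongrightarrow> integral {\<epsilon>..} g) sequentially"
  proof (rule monotone_convergence_increasing[OF int_f])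
    fix N x assume x: "x \<in> {\<epsilon>..}"
    have "0 \<le> ee N * t N x" using x e ee_nn[of N] by (simp add: t_def)
    then show "f N x \<le> f (Suc N) x" by (simp add: f_def)
  next
    fix x assume x: "x \<in> {\<epsilon>..}"
    show "(\<lambda>N. f N x) \<longlonglongrightarrow> g x"
      unfolding f_def g_def by (rule summable_LIMSEQ[OF sums_summable[OF ser[OF x]]])
  next
    show "bounded (range (\<lambda>N. integral {\<epsilon>..} (f N)))"
    proof (rule boundedI)
      fix y assume "y \<in> range (\<lambda>N. integral {\<epsilon>..} (f N))"
      then obtain N where y: "y = (\<Sum>n<N. ee n * II \<epsilon> k n)" by (auto simp: integral_f)
      have "norm y = (\<Sum>n<N. ee n * II \<epsilon> k n)" unfolding y using II_nn
        by (simp add: sum_nonneg)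
      also have "\<dots> \<le> (\<Sum>n. ee n * II \<epsilon> k n)"
        by (rule sum_le_suminf[OF sumII]) (auto intro: II_nn)
      finally show "norm y \<le> (\<Sum>n. ee n * II \<epsilon> k n)" .
    qed
  qed
  have "(\<lambda>N. integral {\<epsilon>..} (f N)) \<longlonglongrightarrow> (\<Sum>n. ee n * II \<epsilon> k n)"
    unfolding integral_f by (rule summable_LIMSEQ[OF sumII])
  then have ig: "integral {\<epsilon>..} g = (\<Sum>n. ee n * II \<epsilon> k n)"
    using mct LIMSEQ_unique by blast
  have "integral {\<epsilon>..} F = integral {\<epsilon>..} (\<lambda>x. s * g x)"
  proof (rule integral_cong)
    fix x assume x: "x \<in> {\<epsilon>..}"
    have "g x = s * F x" unfolding g_def using sums_unique[OF ser[OF x]] by simp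
    then show "F x = s * g x" by (simp add: ssx)
  qed
  also have "\<dots> = s * (\<Sum>n. ee n * II \<epsilon> k n)" by (simp add: ig)
  finally have lhs: "integral {\<epsilon>..} F = s * (\<Sum>n. ee n * II \<epsilon> k n)" .
  have Z: "Z_eps \<epsilon> k j = (\<Sum>q. real (Suc q) ^ j * II \<epsilon> k (Suc q))" for j
    by (simp add: Z_eps_def II_def)
  have "(\<Sum>j=1..k+1. (-1) ^ (j + 1) * K_coef (k + 1) j * Z_eps \<epsilon> k j)
      = (\<Sum>j=1..k+1. \<Sum>q. (-1) ^ (j + 1) * K_coef (k + 1) j * (real (Suc q) ^ j * II \<epsilon> k (Suc q)))"
    unfolding Z by (intro sum.cong refl suminf_mult[symmetric] summable_II[OF e])
  also have "\<dots> = (\<Sum>q. \<Sum>j=1..k+1. (-1) ^ (j + 1) * K_coef (k + 1) j * (real (Suc q) ^ j * II \<epsilon> k (Suc q)))"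
    by (rule suminf_sum[symmetric]) (intro summable_mult summable_II[OF e])
  also have "\<dots> = (\<Sum>q. s * (ee (Suc q) * II \<epsilon> k (Suc q)))"
  proof (intro suminf_cong)
    fix q
    have "(\<Sum>j=1..k+1. (-1) ^ (j + 1) * K_coef (k + 1) j * (real (Suc q) ^ j * II \<epsilon> k (Suc q)))
        = (\<Sum>j=1..k+1. (-1) ^ (j + 1) * K_coef (k + 1) j * real (Suc q) ^ j) * II \<epsilon> k (Suc q)"
      by (simp only: sum_distrib_right mult.assoc)
    also have "\<dots> = s * (ee (Suc q) * II \<epsilon> k (Suc q))"
      using faul[OF k, of "Suc q"] dd by simp
    finally show "(\<Sum>j=1..k+1. (-1) ^ (j + 1) * K_coef (k + 1) j * (real (Suc q) ^ j * II \<epsilon> k (Suc q)))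
        = s * (ee (Suc q) * II \<epsilon> k (Suc q))" .
  qed
  also have "\<dots> = s * (\<Sum>q. ee (Suc q) * II \<epsilon> k (Suc q))"
    by (rule suminf_mult) (use sumII summable_Suc_iff[of "\<lambda>n. ee n * II \<epsilon> k n"] in blast)
  also have "\<dots> = s * (\<Sum>n. ee n * II \<epsilon> k n)"
    using suminf_split_head[OF sumII] by (simp add: ee0)
  finally show ?thesis using lhs unfolding F_def by simp
qed


end
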